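(* Let $\mathbb F$ be a field and $G,F_1,\dots,F_m\in\mathbb F[x_1,\dots,x_n]$. If there is an RIPS certificate that $G\in\sqrt{\langle F_1,\dots,F_m\rangle}$, then there is a Hilbert-like RIPS certificate that $G\in\sqrt{\langle F_1,\dots,F_m\rangle}$.
   Context: RIPS certificate that $G\in\sqrt{\langle F_1,\dots,F_m\rangle}$: a rational function $C(\vec x,\vec y)$ in $\vec x$ and placeholder variables $y_1,\dots,y_m$, written $C=C'/D$ with $C',D$ relatively prime polynomials, such that (0) if $G$ is an invertible constant then $D$ is constant, and otherwise $D(\vec x,\vec F(\vec x))$ does not vanish identically on any irreducible component over $\overline{\mathbb F}$ of $V(F_1,\dots,F_m)$; (1) $C(\vec x,\vec0)=0$; (2) $C(\vec x,F_1(\vec x),\dots,F_m(\vec x))=G(\vec x)$. It is Hilbert-like if it has the form $\frac{1}{D(\vec x)}\sum_iy_iG_i(\vec x)$, i.e. the denominator does not involve the $y_i$ and the numerator is linear in the $y_i$. *)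

theory Defs
  imports "HOL-Library.Poly_Mapping" "HOL-Algebra.Algebraic_Closure_Type"
begin

text \<open>Variable number i is x_i
  (indexing from 0). Polynomials in x_1..x_n use variables 0..n-1; the placeholder
  variables y_1..y_m are the variables n..n+m-1.\<close>

type_synonym 'a mpoly = "(nat \<Rightarrow>\<^sub>0 nat) \<Rightarrow>\<^sub>0 'a"

definition mvars :: "'a::zero mpoly \<Rightarrow> nat set" where
  "mvars p = \<Union> (Poly_Mapping.keys ` Poly_Mapping.keys p)"

definition mconst :: "'a::zero \<Rightarrow> 'a mpoly" where
  "mconst c = Poly_Mapping.single 0 c"

definition mvar :: "nat \<Rightarrow> 'a::{zero,one} mpoly" where
  "mvar i = Poly_Mapping.single (Poly_Mapping.single i 1) 1"

definition mpeval :: "('a::zero \<Rightarrow> 'b::comm_semiring_1) \<Rightarrow> 'a mpoly \<Rightarrow> (nat \<Rightarrow> 'b) \<Rightarrow> 'b" where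
  "mpeval phi p a = (\<Sum>mon\<in>Poly_Mapping.keys p. phi (Poly_Mapping.lookup p mon) * (\<Prod>i\<in>Poly_Mapping.keys mon. a i ^ Poly_Mapping.lookup mon i))"

definition subst_y :: "nat \<Rightarrow> nat \<Rightarrow> (nat \<Rightarrow> 'a::comm_ring_1 mpoly) \<Rightarrow> 'a mpoly \<Rightarrow> 'a mpoly" where
  "subst_y n m Y p = mpeval mconst p (\<lambda>i. if i < n then mvar i else if i < n + m then Y (i - n) else 0)"

definition aff_pts :: "nat \<Rightarrow> (nat \<Rightarrow> 'a::field alg_closure) set" where
  "aff_pts n = {p. \<forall>i\<ge>n. p i = 0}"

definition zclosed :: "nat \<Rightarrow> (nat \<Rightarrow> 'a::field alg_closure) set \<Rightarrow> bool" where
  "zclosed n Z \<longleftrightarrow> (\<exists>S :: 'a alg_closure mpoly set. (\<forall>q\<in>S. mvars q \<subseteq> {..<n}) \<and>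
      Z = {p \<in> aff_pts n. \<forall>q\<in>S. mpeval id q p = 0})"

definition zirreducible :: "nat \<Rightarrow> (nat \<Rightarrow> 'a::field alg_closure) set \<Rightarrow> bool" where
  "zirreducible n Z \<longleftrightarrow> Z \<noteq> {} \<and>
     (\<forall>A B. zclosed n A \<longrightarrow> zclosed n B \<longrightarrow> Z \<subseteq> A \<union> B \<longrightarrow> Z \<subseteq> A \<or> Z \<subseteq> B)"

definition variety :: "nat \<Rightarrow> nat \<Rightarrow> (nat \<Rightarrow> 'a::field mpoly) \<Rightarrow> (nat \<Rightarrow> 'a alg_closure) set" where
  "variety n m F = {p \<in> aff_pts n. \<forall>i<m. mpeval to_ac (F i) p = 0}"

definition irr_component :: "nat \<Rightarrow> (nat \<Rightarrow> 'a::field alg_closure) set \<Rightarrow> (nat \<Rightarrow> 'a alg_closure) set \<Rightarrow> bool" where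
  "irr_component n V Z \<longleftrightarrow> zclosed n Z \<and> zirreducible n Z \<and> Z \<subseteq> V \<and>
     (\<forall>Z'. zclosed n Z' \<longrightarrow> zirreducible n Z' \<longrightarrow> Z \<subseteq> Z' \<longrightarrow> Z' \<subseteq> V \<longrightarrow> Z' = Z)"

text \<open>RIPS certificate C = Cn / D (Cn, D coprime polynomials in x, y) that G is in the
  radical of the ideal generated by F_0..F_(m-1).\<close>
definition RIPS_cert :: "nat \<Rightarrow> nat \<Rightarrow> (nat \<Rightarrow> 'a::field mpoly) \<Rightarrow> 'a mpoly \<Rightarrow> 'a mpoly \<Rightarrow> 'a mpoly \<Rightarrow> bool" where
  "RIPS_cert n m F G Cn D \<longleftrightarrow>
     mvars Cn \<subseteq> {..<n+m} \<and> mvars D \<subseteq> {..<n+m} \<and> D \<noteq> 0 \<and> (\<forall>c. c dvd Cn \<longrightarrow> c dvd D \<longrightarrow> c dvd 1) \<and>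
     \<comment> \<open>(0)\<close>
     ((\<exists>c. c \<noteq> 0 \<and> G = mconst c) \<longrightarrow> (\<exists>d. D = mconst d)) \<and>
     ((\<not> (\<exists>c. c \<noteq> 0 \<and> G = mconst c)) \<longrightarrow>
        (\<forall>Z. irr_component n (variety n m F) Z \<longrightarrow>
             \<not> (\<forall>p\<in>Z. mpeval to_ac (subst_y n m F D) p = 0))) \<and>
     \<comment> \<open>(1): C(x,0) = 0\<close>
     subst_y n m (\<lambda>_. 0) Cn = 0 \<and>
     \<comment> \<open>(2): C(x,F(x)) = G(x), denominator D(x,F(x)) nonzero\<close>
     subst_y n m F D \<noteq> 0 \<and> subst_y n m F Cn = G * subst_y n m F D"

definition Hilbert_like_RIPS_cert :: "nat \<Rightarrow> nat \<Rightarrow> (nat \<Rightarrow> 'a::field mpoly) \<Rightarrow> 'a mpoly \<Rightarrow> 'a mpoly \<Rightarrow> 'a mpoly \<Rightarrow> bool" where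
  "Hilbert_like_RIPS_cert n m F G Cn D \<longleftrightarrow> RIPS_cert n m F G Cn D \<and> mvars D \<subseteq> {..<n} \<and>
     (\<exists>Gs. (\<forall>i<m. mvars (Gs i) \<subseteq> {..<n}) \<and> Cn = (\<Sum>i<m. mvar (n + i) * Gs i))"

end

theory Submission
  imports Defs
begin


lemma poly_sum_singles:
  "(\<Sum>k\<in>Poly_Mapping.keys p. Poly_Mapping.single k (Poly_Mapping.lookup p k)) = (p :: 'k \<Rightarrow>\<^sub>0 'b::comm_monoid_add)"
proof (rule poly_mapping_eqI)
  fix j
  have "Poly_Mapping.lookup (\<Sum>k\<in>Poly_Mapping.keys p. Poly_Mapping.single k (Poly_Mapping.lookup p k)) j
     = (\<Sum>k\<in>Poly_Mapping.keys p. (Poly_Mapping.lookup p k when k = j))"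
    by (simp add: lookup_sum lookup_single)
  also have "\<dots> = Poly_Mapping.lookup p j"
    by (cases "j \<in> Poly_Mapping.keys p") (auto simp: when_def in_keys_iff)
  finally show "Poly_Mapping.lookup (\<Sum>k\<in>Poly_Mapping.keys p. Poly_Mapping.single k (Poly_Mapping.lookup p k)) j = Poly_Mapping.lookup p j" .
qed



definition mval :: "(nat \<Rightarrow> 'b::comm_semiring_1) \<Rightarrow> (nat \<Rightarrow>\<^sub>0 nat) \<Rightarrow> 'b" where
  "mval a u = (\<Prod>i\<in>Poly_Mapping.keys u. a i ^ Poly_Mapping.lookup u i)"

lemma mpeval_mval: "mpeval phi p a = (\<Sum>u\<in>Poly_Mapping.keys p. phi (Poly_Mapping.lookup p u) * mval a u)"
  by (simp add: mpeval_def mval_def)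

lemma mval_superset: "finite S \<Longrightarrow> Poly_Mapping.keys u \<subseteq> S \<Longrightarrow>
   mval a u = (\<Prod>i\<in>S. a i ^ Poly_Mapping.lookup u i)"
  unfolding mval_def by (rule prod.mono_neutral_left) (auto simp: in_keys_iff)

lemma mval_add: "mval a (m1 + m2) = mval a m1 * mval a m2"
proof -
  let ?S = "Poly_Mapping.keys m1 \<union> Poly_Mapping.keys m2"
  have f: "finite ?S" by simp
  have "mval a (m1 + m2) = (\<Prod>i\<in>?S. a i ^ Poly_Mapping.lookup (m1+m2) i)"
    using keys_add[of m1 m2] by (intro mval_superset[OF f]) auto
  also have "\<dots> = (\<Prod>i\<in>?S. a i ^ Poly_Mapping.lookup m1 i * a i ^ Poly_Mapping.lookup m2 i)"
    by (simp add: lookup_add power_add)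
  also have "\<dots> = mval a m1 * mval a m2"
    using mval_superset[OF f, of m1 a] mval_superset[OF f, of m2 a]
    by (simp add: prod.distrib)
  finally show ?thesis .
qed

lemma mval_zero [simp]: "mval a 0 = 1" by (simp add: mval_def)

lemma mpeval_superset:
  assumes "phi 0 = 0" "finite S" "Poly_Mapping.keys p \<subseteq> S"
  shows "mpeval phi p a = (\<Sum>u\<in>S. phi (Poly_Mapping.lookup p u) * mval a u)"
  unfolding mpeval_mval by (rule sum.mono_neutral_left) (use assms in \<open>auto simp: in_keys_iff\<close>)

locale rhom =
  fixes phi :: "'a::comm_ring_1 \<Rightarrow> 'b::comm_ring_1"
  assumes add: "phi (x + y) = phi x + phi y" and mult: "phi (x * y) = phi x * phi y"
    and zero: "phi 0 = 0" and one: "phi 1 = 1"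
begin

lemma sum: "phi (sum f S) = sum (\<lambda>x. phi (f x)) S"
  by (induction S rule: infinite_finite_induct) (auto simp: zero add)

lemma mpeval_add: "mpeval phi (p + q) a = mpeval phi p a + mpeval phi q a"
proof -
  let ?S = "Poly_Mapping.keys p \<union> Poly_Mapping.keys q"
  have f: "finite ?S" by simp
  have "mpeval phi (p + q) a = (\<Sum>u\<in>?S. phi (Poly_Mapping.lookup (p+q) u) * mval a u)"
    by (rule mpeval_superset[where phi=phi, OF zero f, of "p+q" a]) (use keys_add[of p q] in auto)
  also have "\<dots> = (\<Sum>u\<in>?S. phi (Poly_Mapping.lookup p u) * mval a u + phi (Poly_Mapping.lookup q u) * mval a u)"
    by (simp add: lookup_add add distrib_right)
  also have "\<dots> = mpeval phi p a + mpeval phi q a"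
    using mpeval_superset[where phi=phi, OF zero f, of p a] mpeval_superset[where phi=phi, OF zero f, of q a]
    by (simp add: sum.distrib)
  finally show ?thesis .
qed

lemma mpeval_0 [simp]: "mpeval phi 0 a = 0" by (simp add: mpeval_def)

lemma mpeval_sum: "mpeval phi (sum f S) a = (\<Sum>x\<in>S. mpeval phi (f x) a)"
  by (induction S rule: infinite_finite_induct) (auto simp: mpeval_add)

lemma mpeval_single: "mpeval phi (Poly_Mapping.single u c) a = phi c * mval a u"
  by (cases "c = 0") (auto simp: mpeval_mval zero)

lemma mpeval_mult: "mpeval phi (p * q) a = mpeval phi p a * mpeval phi q a"
proof -
  have e: "p * q = (\<Sum>k\<in>Poly_Mapping.keys p. \<Sum>l\<in>Poly_Mapping.keys q.
      Poly_Mapping.single (k + l) (Poly_Mapping.lookup p k * Poly_Mapping.lookup q l))"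
  proof -
    have "p * q = (\<Sum>k\<in>Poly_Mapping.keys p. Poly_Mapping.single k (Poly_Mapping.lookup p k)) *
          (\<Sum>k\<in>Poly_Mapping.keys q. Poly_Mapping.single k (Poly_Mapping.lookup q k))"
      by (simp only: poly_sum_singles)
    also have "\<dots> = (\<Sum>k\<in>Poly_Mapping.keys p. \<Sum>l\<in>Poly_Mapping.keys q.
      Poly_Mapping.single k (Poly_Mapping.lookup p k) * Poly_Mapping.single l (Poly_Mapping.lookup q l))"
      by (subst sum_distrib_right) (simp only: sum_distrib_left)
    finally show ?thesis by (simp only: mult_single)
  qed
  have "mpeval phi (p * q) a = (\<Sum>k\<in>Poly_Mapping.keys p. \<Sum>l\<in>Poly_Mapping.keys q.
      phi (Poly_Mapping.lookup p k) * mval a k * (phi (Poly_Mapping.lookup q l) * mval a l))"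
    unfolding e mpeval_sum mpeval_single
    by (intro sum.cong refl) (simp add: mult mval_add)
  also have "\<dots> = mpeval phi p a * mpeval phi q a"
    unfolding mpeval_mval by (subst sum_distrib_right) (simp only: sum_distrib_left)
  finally show ?thesis .
qed

lemma mpeval_uminus: "mpeval phi (- p) a = - mpeval phi p a"
  using mpeval_add[of p "-p" a] by (simp add: eq_neg_iff_add_eq_0 add.commute)

lemma mpeval_diff: "mpeval phi (p - q) a = mpeval phi p a - mpeval phi q a"
  using mpeval_add[of p "-q" a] mpeval_uminus[of q a] by simp

lemma mpeval_mconst: "mpeval phi (mconst c) a = phi c"
  by (simp add: mconst_def mpeval_single)

lemma mpeval_mvar: "mpeval phi (mvar i) a = a i"
  by (simp add: mvar_def mpeval_single one mval_def)

end

lemma rhom_mconst: "rhom (mconst :: 'a::comm_ring_1 \<Rightarrow> 'a mpoly)"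
  by unfold_locales (simp_all add: mconst_def single_add mult_single)

lemma rhom_to_ac: "rhom (to_ac :: 'a::field \<Rightarrow> 'a alg_closure)"
  by unfold_locales simp_all

lemma rhom_id: "rhom id"
  by unfold_locales simp_all



lemma mvars_sub_iff: "mvars p \<subseteq> V \<longleftrightarrow> (\<forall>u\<in>Poly_Mapping.keys p. Poly_Mapping.keys u \<subseteq> V)"
  by (auto simp: mvars_def)

lemma mvars_add: "mvars p \<subseteq> V \<Longrightarrow> mvars q \<subseteq> V \<Longrightarrow> mvars (p + q) \<subseteq> V"
  using keys_add[of p q] by (auto simp: mvars_sub_iff)

lemma mvars_0 [simp]: "mvars 0 = {}" by (simp add: mvars_def)

lemma mvars_single: "mvars (Poly_Mapping.single u c) \<subseteq> Poly_Mapping.keys u"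
  by (auto simp: mvars_def)

lemma mvars_mconst [simp]: "mvars (mconst c) = {}"
  by (auto simp: mvars_def mconst_def)

lemma mvars_one [simp]: "mvars (1 :: 'a::{zero_neq_one,monoid_add,comm_semiring_1} mpoly) = {}"
  by (auto simp: mvars_def)

lemma mvars_mvar: "mvars (mvar i :: 'a::zero_neq_one mpoly) = {i}"
  by (simp add: mvars_def mvar_def)

lemma mvars_mult: "mvars p \<subseteq> V \<Longrightarrow> mvars q \<subseteq> V \<Longrightarrow> mvars (p * q :: 'a::comm_semiring_1 mpoly) \<subseteq> V"
proof -
  assume a: "mvars p \<subseteq> V" "mvars q \<subseteq> V"
  show ?thesis unfolding mvars_sub_iff
  proof
    fix u assume "u \<in> Poly_Mapping.keys (p * q)"
    then obtain x y where u: "u = x + y" "x \<in> Poly_Mapping.keys p" "y \<in> Poly_Mapping.keys q"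
      using keys_mult[of p q] by auto
    have "Poly_Mapping.keys u \<subseteq> Poly_Mapping.keys x \<union> Poly_Mapping.keys y"
      unfolding u(1) by (rule keys_add)
    moreover have "Poly_Mapping.keys x \<subseteq> V" "Poly_Mapping.keys y \<subseteq> V"
      using u a unfolding mvars_sub_iff by auto
    ultimately show "Poly_Mapping.keys u \<subseteq> V" by (meson le_sup_iff order_trans)
  qed
qed

lemma mvars_sum: "(\<And>x. x \<in> S \<Longrightarrow> mvars (f x) \<subseteq> V) \<Longrightarrow> mvars (sum f S) \<subseteq> V"
proof (induction S rule: infinite_finite_induct)
  case (insert x F)
  then show ?case by (simp add: mvars_add)
qed simp_all

lemma mvars_prod: "(\<And>x. x \<in> S \<Longrightarrow> mvars (f x) \<subseteq> V) \<Longrightarrow> mvars (prod f S :: 'a::comm_semiring_1 mpoly) \<subseteq> V"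
proof (induction S rule: infinite_finite_induct)
  case (insert x F)
  then show ?case by (simp add: mvars_mult)
qed simp_all

lemma mvars_power: "mvars p \<subseteq> V \<Longrightarrow> mvars (p ^ k :: 'a::comm_semiring_1 mpoly) \<subseteq> V"
  by (induction k) (simp_all add: mvars_mult)

lemma mvars_mpeval:
  assumes "\<And>i. i \<in> mvars p \<Longrightarrow> mvars (a i) \<subseteq> V"
  shows "mvars (mpeval mconst p a :: 'a::comm_ring_1 mpoly) \<subseteq> V"
  unfolding mpeval_def
proof (rule mvars_sum)
  fix u assume u: "u \<in> Poly_Mapping.keys p"
  have "mvars (\<Prod>i\<in>Poly_Mapping.keys u. a i ^ Poly_Mapping.lookup u i) \<subseteq> V"
  proof (rule mvars_prod)
    fix i assume "i \<in> Poly_Mapping.keys u"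
    with u have "i \<in> mvars p" by (auto simp: mvars_def)
    then show "mvars (a i ^ Poly_Mapping.lookup u i) \<subseteq> V" by (intro mvars_power assms)
  qed
  then show "mvars (mconst (Poly_Mapping.lookup p u) * (\<Prod>i\<in>Poly_Mapping.keys u. a i ^ Poly_Mapping.lookup u i)) \<subseteq> V"
    by (intro mvars_mult) auto
qed

lemma mpeval_cong:
  assumes "mvars p \<subseteq> V" "\<And>i. i \<in> V \<Longrightarrow> a i = b i"
  shows "mpeval phi p a = mpeval phi p b"
  unfolding mpeval_def
proof (intro sum.cong refl arg_cong2[where f="(*)"] prod.cong)
  fix u i assume "u \<in> Poly_Mapping.keys p" "i \<in> Poly_Mapping.keys u"
  with assms(1) have "i \<in> V" by (auto simp: mvars_def)
  then show "a i ^ Poly_Mapping.lookup u i = b i ^ Poly_Mapping.lookup u i" using assms(2) by simp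
qed

lemma single_pow: "(Poly_Mapping.single (Poly_Mapping.single i (1::nat)) (1::'a::comm_semiring_1)) ^ k
   = Poly_Mapping.single (Poly_Mapping.single i k) 1"
proof (induction k)
  case 0 then show ?case by simp
next
  case (Suc k)
  have "Poly_Mapping.single i (Suc k) = Poly_Mapping.single i 1 + Poly_Mapping.single i k"
    by (simp add: single_add[symmetric])
  with Suc show ?case by (simp add: mult_single)
qed

lemma prod_singles: "finite S \<Longrightarrow> (\<Prod>i\<in>S. (Poly_Mapping.single (Poly_Mapping.single i (1::nat)) (1::'a::comm_semiring_1)) ^ f i)
   = Poly_Mapping.single (\<Sum>i\<in>S. Poly_Mapping.single i (f i)) 1"
proof (induction S rule: finite_induct)
  case (insert x F)
  then show ?case using single_pow[of x "f x", where 'a='a] by (simp add: mult_single)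
qed simp

lemma mval_mvar: "mval (mvar :: nat \<Rightarrow> 'a::comm_semiring_1 mpoly) u = Poly_Mapping.single u 1"
  unfolding mval_def mvar_def
  using prod_singles[of "Poly_Mapping.keys u" "Poly_Mapping.lookup u", where 'a='a] poly_sum_singles[of u]
  by simp

lemma mpeval_id: "mpeval mconst p mvar = (p :: 'a::comm_ring_1 mpoly)"
proof -
  have "mpeval mconst p mvar = (\<Sum>u\<in>Poly_Mapping.keys p. Poly_Mapping.single u (Poly_Mapping.lookup p u))"
    unfolding mpeval_mval mval_mvar by (simp add: mconst_def mult_single)
  then show ?thesis by (simp add: poly_sum_singles)
qed

lemma subst_id: "mvars p \<subseteq> {..<n} \<Longrightarrow> subst_y n m Y p = (p :: 'a::comm_ring_1 mpoly)"
proof -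
  assume a: "mvars p \<subseteq> {..<n}"
  have "subst_y n m Y p = mpeval mconst p mvar"
    unfolding subst_y_def by (rule mpeval_cong[OF a]) simp
  then show ?thesis by (simp add: mpeval_id)
qed

lemma subst_mvar: "i < m \<Longrightarrow> subst_y n m Y (mvar (n + i)) = (Y i :: 'a::comm_ring_1 mpoly)"
proof -
  assume "i < m"
  have "subst_y n m Y (mvar (n + i)) = (\<lambda>i. if i < n then mvar i else if i < n + m then Y (i - n) else 0) (n + i)"
    unfolding subst_y_def by (rule rhom.mpeval_mvar[OF rhom_mconst])
  with \<open>i < m\<close> show ?thesis by simp
qed

lemma subst_add: "subst_y n m Y (p + q) = subst_y n m Y p + subst_y n m Y (q :: 'a::comm_ring_1 mpoly)"
  unfolding subst_y_def by (rule rhom.mpeval_add[OF rhom_mconst])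

lemma subst_mult: "subst_y n m Y (p * q) = subst_y n m Y p * subst_y n m Y (q :: 'a::comm_ring_1 mpoly)"
  unfolding subst_y_def by (rule rhom.mpeval_mult[OF rhom_mconst])

lemma subst_sum: "subst_y n m Y (sum f S) = (\<Sum>x\<in>S. subst_y n m Y (f x :: 'a::comm_ring_1 mpoly))"
  unfolding subst_y_def by (rule rhom.mpeval_sum[OF rhom_mconst])

lemma subst_mconst: "subst_y n m Y (mconst c) = (mconst c :: 'a::comm_ring_1 mpoly)"
  unfolding subst_y_def by (rule rhom.mpeval_mconst[OF rhom_mconst])

lemma subst_vars:
  assumes "mvars p \<subseteq> {..<n+m}" "\<And>i. i < m \<Longrightarrow> mvars (Y i) \<subseteq> {..<n}"
  shows "mvars (subst_y n m Y p :: 'a::comm_ring_1 mpoly) \<subseteq> {..<n}"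
  unfolding subst_y_def
proof (rule mvars_mpeval)
  fix i assume "i \<in> mvars p"
  then show "mvars (if i < n then mvar i else if i < n + m then Y (i - n) else 0) \<subseteq> {..<n}"
    using assms by (auto simp: mvars_mvar)
qed



definition wt :: "nat \<Rightarrow> (nat \<Rightarrow>\<^sub>0 nat) \<Rightarrow> nat" where
  "wt t u = (\<Sum>i\<in>{i\<in>Poly_Mapping.keys u. t \<le> i}. Poly_Mapping.lookup u i)"

lemma wt_superset: "finite S \<Longrightarrow> Poly_Mapping.keys u \<subseteq> S \<Longrightarrow>
   wt t u = (\<Sum>i\<in>{i\<in>S. t \<le> i}. Poly_Mapping.lookup u i)"
  unfolding wt_def by (rule sum.mono_neutral_left) (auto simp: in_keys_iff)

lemma wt_add: "wt t (a + b) = wt t a + wt t b"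
proof -
  let ?S = "Poly_Mapping.keys a \<union> Poly_Mapping.keys b"
  have f: "finite ?S" by simp
  have "wt t (a + b) = (\<Sum>i\<in>{i\<in>?S. t \<le> i}. Poly_Mapping.lookup (a+b) i)"
    using keys_add[of a b] by (intro wt_superset[OF f]) auto
  also have "\<dots> = (\<Sum>i\<in>{i\<in>?S. t \<le> i}. Poly_Mapping.lookup a i + Poly_Mapping.lookup b i)"
    by (simp add: lookup_add)
  also have "\<dots> = wt t a + wt t b"
    using wt_superset[OF f, of a t] wt_superset[OF f, of b t]
    by (simp add: sum.distrib)
  finally show ?thesis .
qed

lemma wt_zero_iff: "wt t u = 0 \<longleftrightarrow> Poly_Mapping.keys u \<subseteq> {..<t}"
proof
  assume "wt t u = 0"
  then have "\<forall>i\<in>{i\<in>Poly_Mapping.keys u. t \<le> i}. Poly_Mapping.lookup u i = 0"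
    unfolding wt_def by simp
  then show "Poly_Mapping.keys u \<subseteq> {..<t}" by (auto simp: in_keys_iff not_less[symmetric])
next
  assume a: "Poly_Mapping.keys u \<subseteq> {..<t}"
  have e: "{i\<in>Poly_Mapping.keys u. t \<le> i} = {}" using a by auto
  show "wt t u = 0" unfolding wt_def by (simp only: e sum.empty)
qed

lemma wt_single1: "wt t (Poly_Mapping.single j 1) = (if t \<le> j then 1 else 0)"
proof -
  have "{i\<in>Poly_Mapping.keys (Poly_Mapping.single j (1::nat)). t \<le> i} = (if t \<le> j then {j} else {})" by auto
  then show ?thesis by (simp add: wt_def)
qed

lemma keys_sub0_const: "Poly_Mapping.keys p \<subseteq> {0} \<Longrightarrow> p = mconst (Poly_Mapping.lookup p 0)"
  unfolding mconst_def
  by (rule poly_mapping_eqI) (auto simp: lookup_single when_def in_keys_iff)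

lemma GL:
  fixes p q :: "'a::idom mpoly" and f :: "(nat \<Rightarrow>\<^sub>0 nat) \<Rightarrow> int"
  assumes fadd: "\<And>a b. f (a + b) = f a + f b" and p: "p \<noteq> 0" and q: "q \<noteq> 0"
  defines "W1 \<equiv> Max (f ` Poly_Mapping.keys p)" and "W2 \<equiv> Max (f ` Poly_Mapping.keys q)"
  shows "(\<exists>k\<in>Poly_Mapping.keys (p * q). f k = W1 + W2) \<and> (\<forall>k\<in>Poly_Mapping.keys (p * q). f k \<le> W1 + W2)"
proof
  have le1: "f u \<le> W1" if "u \<in> Poly_Mapping.keys p" for u
    unfolding W1_def using that by simp
  have le2: "f u \<le> W2" if "u \<in> Poly_Mapping.keys q" for u
    unfolding W2_def using that by simp
  show "\<forall>k\<in>Poly_Mapping.keys (p * q). f k \<le> W1 + W2"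
  proof
    fix k assume "k \<in> Poly_Mapping.keys (p * q)"
    then obtain a b where "k = a + b" "a \<in> Poly_Mapping.keys p" "b \<in> Poly_Mapping.keys q"
      using keys_mult[of p q] by auto
    then show "f k \<le> W1 + W2" using le1 le2 fadd by (simp add: add_mono)
  qed
  define top where "top r W = (\<Sum>u\<in>{u\<in>Poly_Mapping.keys r. f u = W}. Poly_Mapping.single u (Poly_Mapping.lookup r u))" for r :: "'a mpoly" and W
  have lk_top: "Poly_Mapping.lookup (top r W) u = (if f u = W then Poly_Mapping.lookup r u else 0)" for r W u
    unfolding top_def by (cases "u \<in> Poly_Mapping.keys r") (auto simp: lookup_sum lookup_single when_def in_keys_iff)
  have keys_top: "Poly_Mapping.keys (top r W) \<subseteq> {u. f u = W}" for r W
    using lk_top by (auto simp: in_keys_iff split: if_splits)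
  have keys_rest: "u \<in> Poly_Mapping.keys (r - top r W) \<Longrightarrow> u \<in> Poly_Mapping.keys r \<and> f u \<noteq> W" for r W u
    using lk_top[of r W u] by (auto simp: in_keys_iff lookup_minus split: if_splits)
  have ne: "top r (Max (f ` Poly_Mapping.keys r)) \<noteq> 0" if "r \<noteq> 0" for r
  proof -
    have "Poly_Mapping.keys r \<noteq> {}" using that by simp
    then have "Max (f ` Poly_Mapping.keys r) \<in> f ` Poly_Mapping.keys r" by simp
    then obtain u where u: "u \<in> Poly_Mapping.keys r" "f u = Max (f ` Poly_Mapping.keys r)" by auto
    then have "Poly_Mapping.lookup (top r (Max (f ` Poly_Mapping.keys r))) u \<noteq> 0"
      by (simp add: lk_top in_keys_iff)
    then show ?thesis by auto
  qed
  let ?pt = "top p W1" and ?qt = "top q W2"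
  have "?pt * ?qt \<noteq> 0" using ne[OF p] ne[OF q] unfolding W1_def W2_def by simp
  then obtain k where k: "k \<in> Poly_Mapping.keys (?pt * ?qt)" by (meson all_not_in_conv keys_eq_empty)
  then have fk: "f k = W1 + W2"
  proof -
    obtain a b where "k = a + b" "a \<in> Poly_Mapping.keys ?pt" "b \<in> Poly_Mapping.keys ?qt"
      using keys_mult[of ?pt ?qt] k by auto
    then show ?thesis using keys_top[of p W1] keys_top[of q W2] fadd by auto
  qed
  have decomp: "p * q = ?pt * ?qt + (?pt * (q - ?qt) + (p - ?pt) * q)"
    by (simp add: algebra_simps)
  have "k \<notin> Poly_Mapping.keys (?pt * (q - ?qt) + (p - ?pt) * q)"
  proof
    assume "k \<in> Poly_Mapping.keys (?pt * (q - ?qt) + (p - ?pt) * q)"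
    then have "k \<in> Poly_Mapping.keys (?pt * (q - ?qt)) \<or> k \<in> Poly_Mapping.keys ((p - ?pt) * q)"
      using keys_add[of "?pt * (q - ?qt)" "(p - ?pt) * q"] by auto
    then show False
    proof
      assume "k \<in> Poly_Mapping.keys (?pt * (q - ?qt))"
      then obtain a b where ab: "k = a + b" "a \<in> Poly_Mapping.keys ?pt" "b \<in> Poly_Mapping.keys (q - ?qt)"
        using keys_mult[of ?pt "q - ?qt"] by auto
      then have "f a = W1" using keys_top[of p W1] by auto
      moreover have "f b < W2" using keys_rest[OF ab(3)] le2 by force
      ultimately show False using fk ab(1) fadd by simp
    next
      assume "k \<in> Poly_Mapping.keys ((p - ?pt) * q)"
      then obtain a b where ab: "k = a + b" "a \<in> Poly_Mapping.keys (p - ?pt)" "b \<in> Poly_Mapping.keys q"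
        using keys_mult[of "p - ?pt" q] by auto
      then have "f a < W1" using keys_rest[OF ab(2)] le1 by force
      moreover have "f b \<le> W2" using le2 ab by auto
      ultimately show False using fk ab(1) fadd by simp
    qed
  qed
  then have "Poly_Mapping.lookup (p * q) k = Poly_Mapping.lookup (?pt * ?qt) k"
    by (subst decomp) (simp add: lookup_add in_keys_iff)
  with k have "k \<in> Poly_Mapping.keys (p * q)" by (simp add: in_keys_iff)
  with fk show "\<exists>k\<in>Poly_Mapping.keys (p * q). f k = W1 + W2" by blast
qed

lemma BND:
  fixes p q :: "'a::idom mpoly" and f :: "(nat \<Rightarrow>\<^sub>0 nat) \<Rightarrow> int"
  assumes fadd: "\<And>a b. f (a + b) = f a + f b" and p: "p \<noteq> 0" and q: "q \<noteq> 0"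
    and B: "\<And>k. k \<in> Poly_Mapping.keys (p * q) \<Longrightarrow> f k \<le> B"
    and u: "u \<in> Poly_Mapping.keys p" and v: "v \<in> Poly_Mapping.keys q"
  shows "f u + f v \<le> B"
proof -
  obtain k where k: "k \<in> Poly_Mapping.keys (p * q)"
    "f k = Max (f ` Poly_Mapping.keys p) + Max (f ` Poly_Mapping.keys q)"
    using GL[OF fadd p q] by blast
  have "f u \<le> Max (f ` Poly_Mapping.keys p)" "f v \<le> Max (f ` Poly_Mapping.keys q)"
    using u v by simp_all
  with k B[OF k(1)] show ?thesis by linarith
qed

lemma deg_measure:
  fixes c e :: "'a::idom mpoly"
  assumes "c \<noteq> 0" "e \<noteq> 0"
  defines "M \<equiv> \<lambda>r :: 'a mpoly. Max ((\<lambda>u. int (wt 0 u)) ` Poly_Mapping.keys r)"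
  shows "M (c * e) = M c + M e"
proof -
  have fadd: "\<And>a b. int (wt 0 (a + b)) = int (wt 0 a) + int (wt 0 b)" by (simp add: wt_add)
  from GL[OF fadd assms(1,2)] obtain k where k: "k \<in> Poly_Mapping.keys (c * e)" "int (wt 0 k) = M c + M e"
    and all: "\<forall>k\<in>Poly_Mapping.keys (c * e). int (wt 0 k) \<le> M c + M e" unfolding M_def by blast
  have "finite (Poly_Mapping.keys (c * e))" by simp
  moreover have "M c + M e \<in> (\<lambda>u. int (wt 0 u)) ` Poly_Mapping.keys (c * e)"
    using k by force
  ultimately show ?thesis unfolding M_def
    using all unfolding M_def by (intro Max_eqI) auto
qed



lemma mvar_times_single:
  assumes "Poly_Mapping.lookup u j \<ge> 1"
  shows "mvar j * Poly_Mapping.single (u - Poly_Mapping.single j 1) c = Poly_Mapping.single u (c :: 'a::comm_semiring_1)"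
proof -
  have "Poly_Mapping.single j 1 + (u - Poly_Mapping.single j 1) = u"
    using assms by (intro poly_mapping_eqI) (auto simp: lookup_add lookup_minus lookup_single when_def)
  then show ?thesis by (simp add: mvar_def mult_single)
qed

lemma subst0:
  "subst_y n m (\<lambda>_. 0) p =
     (\<Sum>u\<in>Poly_Mapping.keys p. if Poly_Mapping.keys u \<subseteq> {..<n} then Poly_Mapping.single u (Poly_Mapping.lookup p u) else (0 :: 'a::comm_ring_1 mpoly))"
  unfolding subst_y_def mpeval_mval
proof (intro sum.cong refl)
  fix u assume "u \<in> Poly_Mapping.keys p"
  let ?s = "\<lambda>i. if i < n then mvar i else if i < n + m then (0::'a mpoly) else 0"
  show "mconst (Poly_Mapping.lookup p u) * mval ?s u =
    (if Poly_Mapping.keys u \<subseteq> {..<n} then Poly_Mapping.single u (Poly_Mapping.lookup p u) else 0)"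
  proof (cases "Poly_Mapping.keys u \<subseteq> {..<n}")
    case True
    then have "mval ?s u = mval mvar u" unfolding mval_def by (intro prod.cong refl) auto
    with True show ?thesis by (simp add: mval_mvar mconst_def mult_single)
  next
    case False
    then obtain i where i: "i \<in> Poly_Mapping.keys u" "\<not> i < n" by auto
    have "mval ?s u = 0" unfolding mval_def
      using i by (intro prod_zero) (auto intro!: bexI[of _ i] simp: in_keys_iff power_0_left)
    with False show ?thesis by simp
  qed
qed

lemma keys_subst0:
  "Poly_Mapping.keys (subst_y n m (\<lambda>_. 0) p :: 'a::comm_ring_1 mpoly) \<subseteq> {u\<in>Poly_Mapping.keys p. Poly_Mapping.keys u \<subseteq> {..<n}}"
proof
  fix k assume k: "k \<in> Poly_Mapping.keys (subst_y n m (\<lambda>_. 0) p :: 'a mpoly)"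
  define g where "g u = (if Poly_Mapping.keys u \<subseteq> {..<n} then Poly_Mapping.single u (Poly_Mapping.lookup p u) else (0 :: 'a mpoly))" for u
  have "k \<in> (\<Union>u\<in>Poly_Mapping.keys p. Poly_Mapping.keys (g u))"
    using k unfolding subst0 g_def[symmetric] by (rule subsetD[OF keys_sum])
  then obtain u where u: "u \<in> Poly_Mapping.keys p" "k \<in> Poly_Mapping.keys (g u)" by blast
  then show "k \<in> {u\<in>Poly_Mapping.keys p. Poly_Mapping.keys u \<subseteq> {..<n}}"
    by (auto simp: g_def split: if_splits)
qed

lemma DL:
  fixes p :: "'a::comm_ring_1 mpoly"
  assumes pv: "mvars p \<subseteq> {..<n+m}"
  shows "\<exists>H. p = subst_y n m (\<lambda>_. 0) p + (\<Sum>i<m. mvar (n + i) * H i) \<and>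
     (\<forall>i. \<forall>u'\<in>Poly_Mapping.keys (H i). u' + Poly_Mapping.single (n + i) 1 \<in> Poly_Mapping.keys p)"
proof -
  define P where "P u \<longleftrightarrow> Poly_Mapping.keys u \<subseteq> {..<n}" for u :: "nat \<Rightarrow>\<^sub>0 nat"
  define j where "j u = Min {i\<in>Poly_Mapping.keys u. n \<le> i}" for u :: "nat \<Rightarrow>\<^sub>0 nat"
  have jprop: "j u \<in> Poly_Mapping.keys u \<and> n \<le> j u" if "\<not> P u" for u
  proof -
    have "{i\<in>Poly_Mapping.keys u. n \<le> i} \<noteq> {}" using that unfolding P_def by auto
    then have "j u \<in> {i\<in>Poly_Mapping.keys u. n \<le> i}" unfolding j_def by (intro Min_in) auto
    then show ?thesis by simp
  qed
  have jlt: "j u < n + m" if "\<not> P u" "u \<in> Poly_Mapping.keys p" for u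
    using jprop[OF that(1)] pv that(2) unfolding mvars_def by auto
  define H where "H i = (\<Sum>u\<in>Poly_Mapping.keys p. if \<not> P u \<and> j u = n + i then
      Poly_Mapping.single (u - Poly_Mapping.single (n + i) 1) (Poly_Mapping.lookup p u) else 0)" for i
  have "(\<Sum>i<m. mvar (n + i) * H i) = (\<Sum>i<m. \<Sum>u\<in>Poly_Mapping.keys p.
      if \<not> P u \<and> j u = n + i then Poly_Mapping.single u (Poly_Mapping.lookup p u) else 0)"
    unfolding H_def sum_distrib_left
  proof (intro sum.cong refl)
    fix i u assume "u \<in> Poly_Mapping.keys p"
    show "mvar (n + i) * (if \<not> P u \<and> j u = n + i then
      Poly_Mapping.single (u - Poly_Mapping.single (n + i) 1) (Poly_Mapping.lookup p u) else 0) =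
      (if \<not> P u \<and> j u = n + i then Poly_Mapping.single u (Poly_Mapping.lookup p u) else 0)"
    proof (cases "\<not> P u \<and> j u = n + i")
      case True
      then have "Poly_Mapping.lookup u (n + i) \<ge> 1" using jprop[of u] by (auto simp: in_keys_iff)
      then have "mvar (n + i) * Poly_Mapping.single (u - Poly_Mapping.single (n + i) 1) (Poly_Mapping.lookup p u) =
         Poly_Mapping.single u (Poly_Mapping.lookup p u)" by (rule mvar_times_single)
      then show ?thesis unfolding if_P[OF True] .
    next
      case False
      show ?thesis unfolding if_not_P[OF False] by simp
    qed
  qed
  also have "\<dots> = (\<Sum>u\<in>Poly_Mapping.keys p. \<Sum>i<m.
      if \<not> P u \<and> j u = n + i then Poly_Mapping.single u (Poly_Mapping.lookup p u) else 0)"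
    by (rule sum.swap)
  also have "\<dots> = (\<Sum>u\<in>Poly_Mapping.keys p. if \<not> P u then Poly_Mapping.single u (Poly_Mapping.lookup p u) else 0)"
  proof (intro sum.cong refl)
    fix u assume u: "u \<in> Poly_Mapping.keys p"
    show "(\<Sum>i<m. if \<not> P u \<and> j u = n + i then Poly_Mapping.single u (Poly_Mapping.lookup p u) else 0) =
      (if \<not> P u then Poly_Mapping.single u (Poly_Mapping.lookup p u) else 0)"
    proof (cases "P u")
      case False
      then have "j u - n < m" "j u = n + (j u - n)" using jlt[OF False u] jprop[OF False] by auto
      then have "(\<Sum>i<m. if \<not> P u \<and> j u = n + i then Poly_Mapping.single u (Poly_Mapping.lookup p u) else 0) =
         (\<Sum>i<m. if i = j u - n then Poly_Mapping.single u (Poly_Mapping.lookup p u) else 0)"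
        using False by (intro sum.cong refl) auto
      also have "\<dots> = Poly_Mapping.single u (Poly_Mapping.lookup p u)"
        using \<open>j u - n < m\<close> by simp
      finally show ?thesis using False by simp
    qed simp
  qed
  finally have e: "(\<Sum>i<m. mvar (n + i) * H i) = (\<Sum>u\<in>Poly_Mapping.keys p. if \<not> P u then Poly_Mapping.single u (Poly_Mapping.lookup p u) else 0)" .
  have "p = (\<Sum>u\<in>Poly_Mapping.keys p. Poly_Mapping.single u (Poly_Mapping.lookup p u))"
    by (simp add: poly_sum_singles)
  also have "\<dots> = (\<Sum>u\<in>Poly_Mapping.keys p. (if P u then Poly_Mapping.single u (Poly_Mapping.lookup p u) else 0) +
     (if \<not> P u then Poly_Mapping.single u (Poly_Mapping.lookup p u) else 0))"
    by (intro sum.cong refl) simp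
  also have "\<dots> = subst_y n m (\<lambda>_. 0) p + (\<Sum>i<m. mvar (n + i) * H i)"
    unfolding e subst0 sum.distrib P_def ..
  finally have 1: "p = subst_y n m (\<lambda>_. 0) p + (\<Sum>i<m. mvar (n + i) * H i)" .
  have 2: "u' + Poly_Mapping.single (n + i) 1 \<in> Poly_Mapping.keys p" if "u' \<in> Poly_Mapping.keys (H i)" for i u'
  proof -
    define g where "g u = (if \<not> P u \<and> j u = n + i then
      Poly_Mapping.single (u - Poly_Mapping.single (n + i) 1) (Poly_Mapping.lookup p u) else 0)" for u
    have "u' \<in> (\<Union>u\<in>Poly_Mapping.keys p. Poly_Mapping.keys (g u))"
      using that unfolding H_def g_def[symmetric] by (rule subsetD[OF keys_sum])
    then obtain u where u: "u \<in> Poly_Mapping.keys p" "u' \<in> Poly_Mapping.keys (g u)" by blast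
    note u = u[unfolded g_def]
    then have c: "\<not> P u" "j u = n + i" "u' = u - Poly_Mapping.single (n + i) 1"
      by (auto split: if_splits)
    then have "Poly_Mapping.lookup u (n + i) \<ge> 1" using jprop[of u] by (auto simp: in_keys_iff)
    then have "u' + Poly_Mapping.single (n + i) 1 = u"
      unfolding c(3) by (intro poly_mapping_eqI) (auto simp: lookup_add lookup_minus lookup_single when_def)
    with u show ?thesis by simp
  qed
  from 1 2 show ?thesis by blast
qed



definition KF :: "nat \<Rightarrow> nat \<Rightarrow> 'a::zero mpoly \<Rightarrow> bool" where
  "KF n m Cn \<longleftrightarrow> (\<forall>u\<in>Poly_Mapping.keys Cn. wt n u = 1 \<and> wt (n+m) u = 0)"

definition QQ :: "nat \<Rightarrow> nat \<Rightarrow> (nat \<Rightarrow> 'a::field mpoly) \<Rightarrow> 'a mpoly \<Rightarrow> 'a mpoly \<Rightarrow> bool" where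
  "QQ n m F G D \<longleftrightarrow> ((\<exists>c. c \<noteq> 0 \<and> G = mconst c) \<longrightarrow> (\<exists>d. D = mconst d)) \<and>
     ((\<not> (\<exists>c. c \<noteq> 0 \<and> G = mconst c)) \<longrightarrow>
        (\<forall>Z. irr_component n (variety n m F) Z \<longrightarrow>
             \<not> (\<forall>p\<in>Z. mpeval to_ac D p = 0)))"

definition PP :: "nat \<Rightarrow> nat \<Rightarrow> (nat \<Rightarrow> 'a::field mpoly) \<Rightarrow> 'a mpoly \<Rightarrow> 'a mpoly \<Rightarrow> 'a mpoly \<Rightarrow> bool" where
  "PP n m F G D Cn \<longleftrightarrow> D \<noteq> 0 \<and> mvars D \<subseteq> {..<n} \<and> KF n m Cn \<and> subst_y n m F Cn = G * D \<and> QQ n m F G D"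

definition cop :: "'a::field mpoly \<Rightarrow> 'a mpoly \<Rightarrow> bool" where
  "cop Cn D \<longleftrightarrow> (\<forall>c. c dvd Cn \<longrightarrow> c dvd D \<longrightarrow> c dvd 1)"

definition Mn :: "'a::zero mpoly \<Rightarrow> int" where
  "Mn r = Max ((\<lambda>u. int (wt 0 u)) ` Poly_Mapping.keys r)"

lemma wt0_zero: "wt 0 u = 0 \<Longrightarrow> u = 0"
  using wt_zero_iff[of 0 u] by simp

lemma mconst_dvd1: "k \<noteq> 0 \<Longrightarrow> mconst (k :: 'a::field) dvd 1"
proof -
  assume "k \<noteq> 0"
  then have "1 = mconst k * mconst (inverse k)" by (simp add: mconst_def mult_single)
  then show ?thesis by (rule dvdI)
qed

lemma keys_vars: "u \<in> Poly_Mapping.keys p \<Longrightarrow> mvars p \<subseteq> V \<Longrightarrow> Poly_Mapping.keys u \<subseteq> V"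
  by (auto simp: mvars_def)

lemma reduce_step:
  fixes D Cn c e f :: "'a::field mpoly"
  assumes P: "PP n m F G D Cn" and D: "D = c * e" and Cn: "Cn = c * f" and nu: "\<not> c dvd 1"
  shows "PP n m F G e f \<and> nat (Mn e) < nat (Mn D)"
proof -
  have Dn: "D \<noteq> 0" and Dv: "mvars D \<subseteq> {..<n}" and KC: "KF n m Cn" and S: "subst_y n m F Cn = G * D"
    and Q: "QQ n m F G D" using P unfolding PP_def by auto
  have c0: "c \<noteq> 0" and e0: "e \<noteq> 0" using Dn D by auto
  have fadd: "\<And>a b. int (wt t (a + b)) = int (wt t a) + int (wt t b)" for t by (simp add: wt_add)
  have fadd': "\<And>a b. - int (wt t (a + b)) = - int (wt t a) + - int (wt t b)" for t by (simp add: wt_add)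
  obtain u0 where u0: "u0 \<in> Poly_Mapping.keys c" using c0 by (meson all_not_in_conv keys_eq_empty)
  have Dwt: "int (wt n k) \<le> 0" if "k \<in> Poly_Mapping.keys (c * e)" for k
    using keys_vars[OF that[folded D] Dv] wt_zero_iff[of n k] by simp
  have cwt: "wt n v = 0" if "v \<in> Poly_Mapping.keys c" for v
  proof -
    obtain w where "w \<in> Poly_Mapping.keys e" using e0 by (meson all_not_in_conv keys_eq_empty)
    from BND[OF fadd c0 e0 Dwt that this] show ?thesis by simp
  qed
  have ewt: "wt n v = 0" if "v \<in> Poly_Mapping.keys e" for v
    using BND[OF fadd c0 e0 Dwt u0 that] by simp
  have cv: "mvars c \<subseteq> {..<n}" using cwt wt_zero_iff unfolding mvars_sub_iff by blast
  have ev: "mvars e \<subseteq> {..<n}" using ewt wt_zero_iff unfolding mvars_sub_iff by blast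
  have meas: "Mn D = Mn c + Mn e" unfolding D Mn_def by (rule deg_measure[OF c0 e0])
  have Mc: "Mn c > 0"
  proof (rule ccontr)
    assume "\<not> Mn c > 0"
    have "\<forall>v\<in>Poly_Mapping.keys c. int (wt 0 v) \<le> 0"
    proof
      fix v assume v: "v \<in> Poly_Mapping.keys c"
      have "int (wt 0 v) \<le> Mn c" unfolding Mn_def using v by simp
      with \<open>\<not> Mn c > 0\<close> show "int (wt 0 v) \<le> 0" by linarith
    qed
    then have "Poly_Mapping.keys c \<subseteq> {0}" using wt0_zero by fastforce
    then have "c = mconst (Poly_Mapping.lookup c 0)" by (rule keys_sub0_const)
    moreover have "Poly_Mapping.lookup c 0 \<noteq> 0" using c0 calculation by (auto simp: mconst_def)
    ultimately have "c dvd 1" using mconst_dvd1 by metis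
    with nu show False by simp
  qed
  obtain w0 where w0: "w0 \<in> Poly_Mapping.keys e" using e0 by (meson all_not_in_conv keys_eq_empty)
  have "Mn e \<ge> int (wt 0 w0)" unfolding Mn_def using w0 by simp
  then have Me: "Mn e \<ge> 0" by linarith
  have lt: "nat (Mn e) < nat (Mn D)" using meas Mc Me by linarith
  have KF: "KF n m f"
  proof (cases "f = 0")
    case True then show ?thesis by (simp add: KF_def)
  next
    case f0: False
    have B1: "int (wt n k) \<le> 1" if "k \<in> Poly_Mapping.keys (c * f)" for k
      using KC that unfolding Cn KF_def by auto
    have B2: "- int (wt n k) \<le> -1" if "k \<in> Poly_Mapping.keys (c * f)" for k
      using KC that unfolding Cn KF_def by auto
    have B3: "int (wt (n+m) k) \<le> 0" if "k \<in> Poly_Mapping.keys (c * f)" for k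
      using KC that unfolding Cn KF_def by auto
    have u0n: "wt n u0 = 0" using cwt u0 by simp
    have u0nm: "wt (n+m) u0 = 0"
      using u0n wt_zero_iff[of n u0] wt_zero_iff[of "n+m" u0] by auto
    show ?thesis unfolding KF_def
    proof
      fix v assume v: "v \<in> Poly_Mapping.keys f"
      have "wt n v \<le> 1" using BND[OF fadd c0 f0 B1 u0 v] u0n by simp
      moreover have "wt n v \<ge> 1" using BND[OF fadd' c0 f0 B2 u0 v] u0n by simp
      moreover have "wt (n+m) v = 0" using BND[OF fadd c0 f0 B3 u0 v] u0nm by simp
      ultimately show "wt n v = 1 \<and> wt (n + m) v = 0" by simp
    qed
  qed
  have "c * subst_y n m F f = c * (G * e)"
  proof -
    have "c * subst_y n m F f = subst_y n m F c * subst_y n m F f" using subst_id[OF cv] by simp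
    also have "\<dots> = subst_y n m F Cn" unfolding Cn subst_mult ..
    also have "\<dots> = c * (G * e)" unfolding S D by (simp add: mult_ac)
    finally show ?thesis .
  qed
  then have Sf: "subst_y n m F f = G * e" using c0 by simp
  have Qe: "QQ n m F G e"
    unfolding QQ_def
  proof (intro conjI impI allI)
    assume cG: "\<exists>c. c \<noteq> 0 \<and> G = mconst c"
    then obtain d where d: "D = mconst d" using Q unfolding QQ_def by blast
    have B0: "int (wt 0 k) \<le> 0" if "k \<in> Poly_Mapping.keys (c * e)" for k
      using that unfolding D[symmetric] d by (auto simp: mconst_def split: if_splits simp: wt_def)
    have "Poly_Mapping.keys e \<subseteq> {0}"
    proof
      fix v assume "v \<in> Poly_Mapping.keys e"
      from BND[OF fadd c0 e0 B0 u0 this] have "wt 0 v = 0" by simp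
      then show "v \<in> {0}" using wt0_zero by simp
    qed
    then show "\<exists>d. e = mconst d" using keys_sub0_const by blast
  next
    fix Z assume ncG: "\<not> (\<exists>c. c \<noteq> 0 \<and> G = mconst c)" and Z: "irr_component n (variety n m F) Z"
    show "\<not> (\<forall>p\<in>Z. mpeval to_ac e p = 0)"
    proof
      assume "\<forall>p\<in>Z. mpeval to_ac e p = 0"
      then have "\<forall>p\<in>Z. mpeval to_ac D p = 0"
        unfolding D by (simp add: rhom.mpeval_mult[OF rhom_to_ac])
      with Q ncG Z show False unfolding QQ_def by blast
    qed
  qed
  show ?thesis using e0 ev KF Sf Qe lt unfolding PP_def by blast
qed

lemma reduce:
  fixes D Cn :: "'a::field mpoly"
  assumes "PP n m F G D Cn"
  shows "\<exists>D' Cn'. PP n m F G D' Cn' \<and> cop Cn' D'"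
  using assms
proof (induction "nat (Mn D)" arbitrary: D Cn rule: less_induct)
  case less
  show ?case
  proof (cases "cop Cn D")
    case True then show ?thesis using less.prems by blast
  next
    case False
    then obtain c where c: "c dvd Cn" "c dvd D" "\<not> c dvd 1" unfolding cop_def by blast
    obtain e where e: "D = c * e" using c(2) by (auto elim: dvdE)
    obtain f where f: "Cn = c * f" using c(1) by (auto elim: dvdE)
    from reduce_step[OF less.prems e f c(3)] have "PP n m F G e f" "nat (Mn e) < nat (Mn D)" by auto
    then show ?thesis using less.hyps by blast
  qed
qed



lemma keys_sub_add: "Poly_Mapping.keys (u :: nat \<Rightarrow>\<^sub>0 nat) \<subseteq> Poly_Mapping.keys (u + v)"
  by (auto simp: in_keys_iff lookup_add)

lemma KF_form:
  fixes Gs :: "nat \<Rightarrow> 'a::comm_ring_1 mpoly"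
  assumes "\<forall>i<m. mvars (Gs i) \<subseteq> {..<n}"
  shows "KF n m (\<Sum>i<m. mvar (n + i) * Gs i)"
  unfolding KF_def
proof
  fix k assume "k \<in> Poly_Mapping.keys (\<Sum>i<m. mvar (n + i) * Gs i)"
  then have "k \<in> (\<Union>i\<in>{..<m}. Poly_Mapping.keys (mvar (n + i) * Gs i))"
    by (rule subsetD[OF keys_sum])
  then obtain i where i: "i < m" "k \<in> Poly_Mapping.keys (mvar (n + i) * Gs i)" by blast
  then obtain a b where ab: "k = a + b" "a \<in> Poly_Mapping.keys (mvar (n + i) :: 'a mpoly)" "b \<in> Poly_Mapping.keys (Gs i)"
    using keys_mult[of "mvar (n + i) :: 'a mpoly" "Gs i"] by blast
  have a: "a = Poly_Mapping.single (n + i) 1" using ab(2) by (simp add: mvar_def split: if_splits)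
  have "Poly_Mapping.keys b \<subseteq> {..<n}" using keys_vars[OF ab(3) assms[rule_format, OF i(1)]] .
  then have b1: "wt n b = 0" and b2: "wt (n + m) b = 0" by (auto simp: wt_zero_iff)
  show "wt n k = 1 \<and> wt (n + m) k = 0"
    unfolding ab(1) a wt_add wt_single1 using b1 b2 i(1) by simp
qed

lemma initial:
  fixes G :: "'a::field mpoly"
  assumes Fv: "\<forall>i<m. mvars (F i) \<subseteq> {..<n}" and R: "RIPS_cert n m F G Cn0 D0"
  shows "\<exists>D Cn. PP n m F G D Cn"
proof -
  note R' = R[unfolded RIPS_cert_def]
  have Cv: "mvars Cn0 \<subseteq> {..<n+m}" using R' by (elim conjE) assumption
  have D0v: "mvars D0 \<subseteq> {..<n+m}" using R' by (elim conjE) assumption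
  have Q0: "(\<exists>c. c \<noteq> 0 \<and> G = mconst c) \<longrightarrow> (\<exists>d. D0 = mconst d)" using R' by (elim conjE) assumption
  have Q1: "(\<not> (\<exists>c. c \<noteq> 0 \<and> G = mconst c)) \<longrightarrow>
        (\<forall>Z. irr_component n (variety n m F) Z \<longrightarrow> \<not> (\<forall>p\<in>Z. mpeval to_ac (subst_y n m F D0) p = 0))"
    using R' by (elim conjE) assumption
  have Z0: "subst_y n m (\<lambda>_. 0) Cn0 = 0" using R' by (elim conjE) assumption
  have Dn: "subst_y n m F D0 \<noteq> 0" using R' by (elim conjE) assumption
  have S: "subst_y n m F Cn0 = G * subst_y n m F D0" using R' by (elim conjE) assumption
  define D where "D = subst_y n m F D0"
  have Dv: "mvars D \<subseteq> {..<n}" unfolding D_def using D0v Fv by (intro subst_vars) auto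
  obtain H where H: "Cn0 = subst_y n m (\<lambda>_. 0) Cn0 + (\<Sum>i<m. mvar (n + i) * H i)"
    and Hk: "\<forall>i. \<forall>u'\<in>Poly_Mapping.keys (H i). u' + Poly_Mapping.single (n + i) 1 \<in> Poly_Mapping.keys Cn0"
    using DL[OF Cv] by blast
  have Hv: "mvars (H i) \<subseteq> {..<n+m}" for i
    unfolding mvars_sub_iff
  proof
    fix u' assume "u' \<in> Poly_Mapping.keys (H i)"
    then have uk: "u' + Poly_Mapping.single (n + i) 1 \<in> Poly_Mapping.keys Cn0" using Hk by blast
    show "Poly_Mapping.keys u' \<subseteq> {..<n+m}" by (rule order_trans[OF keys_sub_add keys_vars[OF uk Cv]])
  qed
  define Gs where "Gs i = subst_y n m F (H i)" for i
  have Gv: "\<forall>i<m. mvars (Gs i) \<subseteq> {..<n}" unfolding Gs_def using Hv Fv by (simp add: subst_vars)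
  define Cn where "Cn = (\<Sum>i<m. mvar (n + i) * Gs i)"
  have "subst_y n m F Cn = (\<Sum>i<m. F i * Gs i)"
    unfolding Cn_def subst_sum subst_mult using Gv by (intro sum.cong refl) (simp add: subst_mvar subst_id)
  also have "\<dots> = subst_y n m F Cn0"
    by (subst H) (simp add: Z0 subst_sum subst_mult subst_mvar Gs_def)
  also have "\<dots> = G * D" using S D_def by simp
  finally have SC: "subst_y n m F Cn = G * D" .
  have Q: "QQ n m F G D"
    unfolding QQ_def
  proof (intro conjI impI)
    assume "\<exists>c. c \<noteq> 0 \<and> G = mconst c"
    then obtain d where "D0 = mconst d" using Q0 by blast
    then show "\<exists>d. D = mconst d" unfolding D_def by (auto simp: subst_mconst)
  next
    assume "\<not> (\<exists>c. c \<noteq> 0 \<and> G = mconst c)"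
    then show "\<forall>Z. irr_component n (variety n m F) Z \<longrightarrow> \<not> (\<forall>p\<in>Z. mpeval to_ac D p = 0)"
      using Q1 unfolding D_def by blast
  qed
  have "PP n m F G D Cn" unfolding PP_def
    using Dn Dv KF_form[OF Gv] SC Q unfolding D_def Cn_def by blast
  then show ?thesis by blast
qed

lemma final:
  fixes G :: "'a::field mpoly"
  assumes P: "PP n m F G D Cn" and C: "cop Cn D"
  shows "Hilbert_like_RIPS_cert n m F G Cn D"
proof -
  have Dn: "D \<noteq> 0" and Dv: "mvars D \<subseteq> {..<n}" and KC: "KF n m Cn" and S: "subst_y n m F Cn = G * D"
    and Q: "QQ n m F G D" using P unfolding PP_def by auto
  have Cv: "mvars Cn \<subseteq> {..<n+m}"
    unfolding mvars_sub_iff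
  proof
    fix u assume "u \<in> Poly_Mapping.keys Cn"
    then have "wt (n+m) u = 0" using KC unfolding KF_def by blast
    then show "Poly_Mapping.keys u \<subseteq> {..<n+m}" by (simp add: wt_zero_iff)
  qed
  have Dv': "mvars D \<subseteq> {..<n+m}" using Dv by auto
  have SD: "subst_y n m F D = D" by (rule subst_id[OF Dv])
  have Z: "subst_y n m (\<lambda>_. 0) Cn = 0"
  proof -
    have "Poly_Mapping.keys (subst_y n m (\<lambda>_. 0) Cn) = {}"
    proof -
      have "\<not> Poly_Mapping.keys u \<subseteq> {..<n}" if "u \<in> Poly_Mapping.keys Cn" for u
        using KC that wt_zero_iff[of n u] unfolding KF_def by auto
      then have e: "{u\<in>Poly_Mapping.keys Cn. Poly_Mapping.keys u \<subseteq> {..<n}} = {}" by blast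
      have "Poly_Mapping.keys (subst_y n m (\<lambda>_. 0) Cn) \<subseteq> {}" using keys_subst0[of n m Cn] unfolding e .
      then show ?thesis by simp
    qed
    then show ?thesis by simp
  qed
  obtain H where H: "Cn = subst_y n m (\<lambda>_. 0) Cn + (\<Sum>i<m. mvar (n + i) * H i)"
    and Hk: "\<forall>i. \<forall>u'\<in>Poly_Mapping.keys (H i). u' + Poly_Mapping.single (n + i) 1 \<in> Poly_Mapping.keys Cn"
    using DL[OF Cv] by blast
  have Hv: "mvars (H i) \<subseteq> {..<n}" for i
    unfolding mvars_sub_iff
  proof
    fix u' assume "u' \<in> Poly_Mapping.keys (H i)"
    then have "u' + Poly_Mapping.single (n + i) 1 \<in> Poly_Mapping.keys Cn" using Hk by blast
    then have "wt n (u' + Poly_Mapping.single (n + i) 1) = 1" using KC unfolding KF_def by blast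
    then have "wt n u' + (if n \<le> n + i then 1 else 0) = 1" by (simp only: wt_add wt_single1)
    then have "wt n u' = 0" by simp
    then show "Poly_Mapping.keys u' \<subseteq> {..<n}" by (simp add: wt_zero_iff)
  qed
  have Cn: "Cn = (\<Sum>i<m. mvar (n + i) * H i)" using H Z by simp
  have Q0: "(\<exists>c. c \<noteq> 0 \<and> G = mconst c) \<longrightarrow> (\<exists>d. D = mconst d)"
    and Q1: "(\<not> (\<exists>c. c \<noteq> 0 \<and> G = mconst c)) \<longrightarrow>
        (\<forall>Z. irr_component n (variety n m F) Z \<longrightarrow> \<not> (\<forall>p\<in>Z. mpeval to_ac D p = 0))"
    using Q unfolding QQ_def by blast+
  have C': "\<forall>c. c dvd Cn \<longrightarrow> c dvd D \<longrightarrow> c dvd 1" using C unfolding cop_def .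
  have R: "RIPS_cert n m F G Cn D"
    unfolding RIPS_cert_def SD
    by (intro conjI Cv Dv' Dn C' Q0 Q1 Z S)
  show ?thesis unfolding Hilbert_like_RIPS_cert_def
    by (intro conjI R Dv exI[of _ H]) (use Hv Cn in auto)
qed

theorem lemmaB9:
  fixes G :: "'a::field mpoly" and F :: "nat \<Rightarrow> 'a mpoly" and n m :: nat
  assumes "mvars G \<subseteq> {..<n}"
    and "\<forall>i<m. mvars (F i) \<subseteq> {..<n}"
    and "\<exists>Cn D. RIPS_cert n m F G Cn D"
  shows "\<exists>Cn D. Hilbert_like_RIPS_cert n m F G Cn D"
proof -
  obtain Cn0 D0 where "RIPS_cert n m F G Cn0 D0" using assms(3) by blast
  then obtain D Cn where "PP n m F G D Cn" using initial[OF assms(2)] by blast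
  then obtain D' Cn' where "PP n m F G D' Cn'" "cop Cn' D'" using reduce by blast
  then show ?thesis using final by blast
qed


end
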